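(* Consider the semi-discrete DG scheme described in the context, with zero-flux boundary conditions, and let $(u_h(t),q_h(t))\in V_h\times V_h$ be a (differentiable in $t$) solution on some time interval with $f(u_h)\ge 0$ on $\Omega$. Define the semi-discrete entropy $$E(t)=\sum_{j=1}^N\int_{I_j}\big(\Phi(x)u_h(x,t)+H(u_h(x,t))\big)\,dx .$$ If the flux parameters satisfy $\beta_0>\Gamma(\beta_1)$, where $$\Gamma(\beta_1):=\max_{1\le j\le N-1}\frac{\{f(u_h)\}\left(\{\partial_x q_h\}+\frac{\beta_1}{2}h[\partial_x^2 q_h]\right)^2\Big|_{x_{j+1/2}}}{\frac{1}{2h}\left(\int_{I_j}+\int_{I_{j+1}}\right)f(u_h)|\partial_x q_h|^2\,dx}$$ (with $h$ the interface mesh size at $x_{j+1/2}$ and all denominators assumed positive), then $$\frac{d}{dt}E(t)\le -\gamma\,\|q_h\|_E^2,\qquad \gamma=1-\sqrt{\Gamma(\beta_1)/\beta_0}\in(0,1).$$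
   Context: Let $\Omega=[a,b]$ with mesh $a=x_{1/2}<x_{3/2}<\dots<x_{N+1/2}=b$, cells $I_j=(x_{j-1/2},x_{j+1/2})$, $\Delta x_j=x_{j+1/2}-x_{j-1/2}$; at the interface $x_{j+1/2}$ the mesh size is $h=(\Delta x_j+\Delta x_{j+1})/2$ (on a uniform mesh $h=\Delta x$). For $k\ge 1$, $V_h=\{v\in L^2(\Omega): v|_{I_j}\in P^k(I_j),\ j=1,\dots,N\}$, $P^k$ being polynomials of degree at most $k$. At an interior interface, $v^\pm$ denote right/left limits, $[v]=v^+-v^-$, $\{v\}=(v^++v^-)/2$. Given functions $\Phi:\Omega\to\mathbb R$, $H:(0,\infty)\to\mathbb R$ ($C^1$) and $f\ge 0$, the semi-discrete DG scheme (for $\partial_t u=\partial_x(f(u)\partial_x q)$, $q=\Phi+H'(u)$) with zero-flux boundary conditions is: find $u_h(t),q_h(t)\in V_h$ such that for all $v,r\in V_h$, $$\int_\Omega \partial_t u_h\, v\,dx=-\sum_{j=1}^N\int_{I_j} f(u_h)\partial_x q_h\,\partial_x v\,dx-\sum_{j=1}^{N-1}\{f(u_h)\}\Big(\widehat{\partial_x q_h}\,[v]+\{\partial_x v\}[q_h]\Big)\Big|_{x_{j+1/2}},$$ $$\int_\Omega q_h r\,dx=\int_\Omega(\Phi(x)+H'(u_h))\,r\,dx,$$ with numerical flux at $x_{j+1/2}$: $\widehat{\partial_x q_h}=\beta_0\frac{[q_h]}{h}+\{\partial_x q_h\}+\beta_1 h[\partial_x^2 q_h]$, where $\beta_0,\beta_1$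 are real parameters. The energy norm is $$\|q_h\|_E^2=\sum_{j=1}^N\int_{I_j}f(u_h)|\partial_x q_h|^2dx+\sum_{j=1}^{N-1}\{f(u_h)\}\frac{\beta_0}{h}[q_h]^2\Big|_{x_{j+1/2}}.$$ *)

theory Defs
  imports "HOL-Analysis.Analysis" "HOL-Computational_Algebra.Polynomial"
begin

text \<open>Mesh: nodes xn 0 < xn 1 < ... < xn N, i.e. xn j is x_{j+1/2}; cell I_j = (xn (j-1), xn j),
  j = 1..N.  An element of V_h is represented by its family of cell polynomials v j (j = 1..N).\<close>

definition in_Vh :: "nat \<Rightarrow> nat \<Rightarrow> (nat \<Rightarrow> real poly) \<Rightarrow> bool" where
  "in_Vh k N v \<longleftrightarrow> (\<forall>j\<in>{1..N}. degree (v j) \<le> k)"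

definition cellint :: "(nat \<Rightarrow> real) \<Rightarrow> nat \<Rightarrow> (real \<Rightarrow> real) \<Rightarrow> real" where
  "cellint xn j g = integral {xn (j - 1)..xn j} g"

definition jump :: "(nat \<Rightarrow> real) \<Rightarrow> (nat \<Rightarrow> real poly) \<Rightarrow> nat \<Rightarrow> real" where
  "jump xn v j = poly (v (Suc j)) (xn j) - poly (v j) (xn j)"

definition avg :: "(nat \<Rightarrow> real) \<Rightarrow> (nat \<Rightarrow> real poly) \<Rightarrow> nat \<Rightarrow> real" where
  "avg xn v j = (poly (v (Suc j)) (xn j) + poly (v j) (xn j)) / 2"

definition avgf :: "(real \<Rightarrow> real) \<Rightarrow> (nat \<Rightarrow> real) \<Rightarrow> (nat \<Rightarrow> real poly) \<Rightarrow> nat \<Rightarrow> real" where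
  "avgf f xn u j = (f (poly (u (Suc j)) (xn j)) + f (poly (u j) (xn j))) / 2"

definition hI :: "(nat \<Rightarrow> real) \<Rightarrow> nat \<Rightarrow> real" where
  "hI xn j = ((xn j - xn (j - 1)) + (xn (Suc j) - xn j)) / 2"

definition dx :: "(nat \<Rightarrow> real poly) \<Rightarrow> nat \<Rightarrow> real poly" where
  "dx v = (\<lambda>j. pderiv (v j))"

definition flux :: "(nat \<Rightarrow> real) \<Rightarrow> real \<Rightarrow> real \<Rightarrow> (nat \<Rightarrow> real poly) \<Rightarrow> nat \<Rightarrow> real" where
  "flux xn \<beta>0 \<beta>1 q j =
     \<beta>0 * jump xn q j / hI xn j + avg xn (dx q) j + \<beta>1 * hI xn j * jump xn (dx (dx q)) j"

definition DGform :: "(real \<Rightarrow> real) \<Rightarrow> (nat \<Rightarrow> real) \<Rightarrow> nat \<Rightarrow> real \<Rightarrow> real \<Rightarrow>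
    (nat \<Rightarrow> real poly) \<Rightarrow> (nat \<Rightarrow> real poly) \<Rightarrow> (nat \<Rightarrow> real poly) \<Rightarrow> real" where
  "DGform f xn N \<beta>0 \<beta>1 u q v =
     - (\<Sum>j=1..N. cellint xn j (\<lambda>x. f (poly (u j) x) * poly (dx q j) x * poly (dx v j) x))
     - (\<Sum>j=1..N-1. avgf f xn u j *
          (flux xn \<beta>0 \<beta>1 q j * jump xn v j + avg xn (dx v) j * jump xn q j))"

definition energy2 :: "(real \<Rightarrow> real) \<Rightarrow> (nat \<Rightarrow> real) \<Rightarrow> nat \<Rightarrow> real \<Rightarrow>
    (nat \<Rightarrow> real poly) \<Rightarrow> (nat \<Rightarrow> real poly) \<Rightarrow> real" where
  "energy2 f xn N \<beta>0 u q =
     (\<Sum>j=1..N. cellint xn j (\<lambda>x. f (poly (u j) x) * (poly (dx q j) x)\<^sup>2))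
     + (\<Sum>j=1..N-1. avgf f xn u j * \<beta>0 / hI xn j * (jump xn q j)\<^sup>2)"

definition Gnum :: "(real \<Rightarrow> real) \<Rightarrow> (nat \<Rightarrow> real) \<Rightarrow> real \<Rightarrow>
    (nat \<Rightarrow> real poly) \<Rightarrow> (nat \<Rightarrow> real poly) \<Rightarrow> nat \<Rightarrow> real" where
  "Gnum f xn \<beta>1 u q j =
     avgf f xn u j * (avg xn (dx q) j + \<beta>1 / 2 * hI xn j * jump xn (dx (dx q)) j)\<^sup>2"

definition Gden :: "(real \<Rightarrow> real) \<Rightarrow> (nat \<Rightarrow> real) \<Rightarrow>
    (nat \<Rightarrow> real poly) \<Rightarrow> (nat \<Rightarrow> real poly) \<Rightarrow> nat \<Rightarrow> real" where
  "Gden f xn u q j =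
     1 / (2 * hI xn j) *
       (cellint xn j (\<lambda>x. f (poly (u j) x) * (poly (dx q j) x)\<^sup>2)
        + cellint xn (Suc j) (\<lambda>x. f (poly (u (Suc j)) x) * (poly (dx q (Suc j)) x)\<^sup>2))"

definition Gamma :: "(real \<Rightarrow> real) \<Rightarrow> (nat \<Rightarrow> real) \<Rightarrow> nat \<Rightarrow> real \<Rightarrow>
    (nat \<Rightarrow> real poly) \<Rightarrow> (nat \<Rightarrow> real poly) \<Rightarrow> real" where
  "Gamma f xn N \<beta>1 u q = Max ((\<lambda>j. Gnum f xn \<beta>1 u q j / Gden f xn u q j) ` {1..N-1})"

definition entropy :: "(real \<Rightarrow> real) \<Rightarrow> (real \<Rightarrow> real) \<Rightarrow> (nat \<Rightarrow> real) \<Rightarrow> nat \<Rightarrow>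
    (nat \<Rightarrow> real poly) \<Rightarrow> real" where
  "entropy \<Phi> H xn N u =
     (\<Sum>j=1..N. cellint xn j (\<lambda>x. \<Phi> x * poly (u j) x + H (poly (u j) x)))"

end

theory Submission
  imports Defs
begin

lemma deriv_eps:
  fixes f :: "real \<Rightarrow> real"
  assumes "(f has_real_derivative D) (at t)" "0 < e"
  shows "eventually (\<lambda>s. \<bar>f s - f t - D * (s - t)\<bar> \<le> e * \<bar>s - t\<bar>) (at t)"
proof -
  have "((\<lambda>y. (f y - f t) / (y - t)) \<longlongrightarrow> D) (at t)"
    using assms(1) has_field_derivative_iff by blast
  hence "eventually (\<lambda>s. dist ((f s - f t) / (s - t)) D < e) (at t)"
    by (rule tendstoD[OF _ assms(2)])
  moreover have "eventually (\<lambda>s. s \<noteq> t) (at t)" by (simp add: eventually_at_filter)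
  ultimately show ?thesis
  proof eventually_elim
    case (elim s)
    hence ne: "s - t \<noteq> 0" by simp
    have "f s - f t - D * (s - t) = ((f s - f t) / (s - t) - D) * (s - t)"
      using ne by (simp add: field_simps)
    hence "\<bar>f s - f t - D * (s - t)\<bar> = \<bar>(f s - f t) / (s - t) - D\<bar> * \<bar>s - t\<bar>"
      by (simp add: abs_mult)
    also have "\<dots> \<le> e * \<bar>s - t\<bar>"
      using elim(1) by (intro mult_right_mono) (auto simp: dist_real_def)
    finally show ?case .
  qed
qed

lemma eps_deriv:
  fixes f :: "real \<Rightarrow> real"
  assumes "\<And>e. 0 < e \<Longrightarrow> eventually (\<lambda>s. \<bar>f s - f t - D * (s - t)\<bar> \<le> e * \<bar>s - t\<bar>) (at t)"
  shows "(f has_real_derivative D) (at t)"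
  unfolding has_field_derivative_iff
proof (rule tendstoI)
  fix e :: real assume e: "0 < e"
  have "eventually (\<lambda>s. \<bar>f s - f t - D * (s - t)\<bar> \<le> e/2 * \<bar>s - t\<bar>) (at t)"
    using assms[of "e/2"] e by simp
  moreover have "eventually (\<lambda>s. s \<noteq> t) (at t)" by (simp add: eventually_at_filter)
  ultimately show "eventually (\<lambda>s. dist ((f s - f t) / (s - t)) D < e) (at t)"
  proof eventually_elim
    case (elim s)
    hence ne: "s - t \<noteq> 0" by simp
    have "f s - f t - D * (s - t) = ((f s - f t) / (s - t) - D) * (s - t)"
      using ne by (simp add: field_simps)
    hence "\<bar>(f s - f t) / (s - t) - D\<bar> * \<bar>s - t\<bar> \<le> e/2 * \<bar>s - t\<bar>"
      using elim by (simp add: abs_mult)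
    hence "\<bar>(f s - f t) / (s - t) - D\<bar> \<le> e/2" using ne by simp
    thus ?case using e by (simp add: dist_real_def)
  qed
qed

lemma poly_le_sum:
  fixes p :: "real poly"
  assumes "degree p \<le> k"
  shows "poly p x = (\<Sum>i\<le>k. coeff p i * x ^ i)"
  apply (subst poly_altdef)
  by (rule sum.mono_neutral_left) (use assms in \<open>auto simp: coeff_eq_0\<close>)

lemma H_unif:
  fixes H Hd :: "real \<Rightarrow> real"
  assumes H: "\<forall>y>0. (H has_real_derivative Hd y) (at y)" and Hd: "continuous_on {0<..} Hd"
    and m: "0 < m" and e: "0 < e"
  shows "\<exists>d>0. \<forall>y0 y. m \<le> y0 \<and> y0 \<le> M \<and> \<bar>y - y0\<bar> < d \<longrightarrow>
           \<bar>H y - H y0 - Hd y0 * (y - y0)\<bar> \<le> e * \<bar>y - y0\<bar>"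
proof -
  have "uniformly_continuous_on {m/2..M+m/2} Hd"
    by (rule compact_uniformly_continuous, rule continuous_on_subset[OF Hd]) (use m in auto)
  then obtain d where d: "d > 0" and
    dd: "\<forall>x\<in>{m/2..M+m/2}. \<forall>x'\<in>{m/2..M+m/2}. dist x' x < d \<longrightarrow> dist (Hd x') (Hd x) < e"
    using e unfolding uniformly_continuous_on_def by blast
  show ?thesis
  proof (intro exI[of _ "min d (m/2)"] conjI allI impI)
    show "0 < min d (m/2)" using d m by simp
    fix y0 y assume a: "m \<le> y0 \<and> y0 \<le> M \<and> \<bar>y - y0\<bar> < min d (m / 2)"
    have key: "\<bar>Hd z - Hd y0\<bar> \<le> e" if "\<bar>z - y0\<bar> \<le> \<bar>y - y0\<bar>" for z
    proof -
      have "z \<in> {m/2..M+m/2}" "y0 \<in> {m/2..M+m/2}" using a that m by (auto simp: abs_le_iff abs_less_iff)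
      moreover have "dist z y0 < d" using a that by (simp add: dist_real_def)
      ultimately have "dist (Hd z) (Hd y0) < e" using dd by blast
      thus ?thesis by (simp add: dist_real_def)
    qed
    have pos: "\<And>x. \<bar>x - y0\<bar> \<le> \<bar>y - y0\<bar> \<Longrightarrow> 0 < x" using a m by (auto simp: abs_le_iff abs_less_iff)
    show "\<bar>H y - H y0 - Hd y0 * (y - y0)\<bar> \<le> e * \<bar>y - y0\<bar>"
    proof (cases "y = y0")
      case True thus ?thesis by simp
    next
      case False
      then consider "y0 < y" | "y < y0" by linarith
      thus ?thesis
      proof cases
        case 1
        obtain z where z: "y0 < z" "z < y" "H y - H y0 = (y - y0) * Hd z"
          using MVT2[OF 1, of H Hd] H pos 1 by force
        have "\<bar>H y - H y0 - Hd y0 * (y - y0)\<bar> = \<bar>Hd z - Hd y0\<bar> * \<bar>y - y0\<bar>"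
        proof -
          have "H y - H y0 - Hd y0 * (y - y0) = (Hd z - Hd y0) * (y - y0)"
            using z(3) by (simp add: algebra_simps)
          thus ?thesis by (simp add: abs_mult)
        qed
        also have "\<dots> \<le> e * \<bar>y - y0\<bar>" using key[of z] z 1 by (intro mult_right_mono) auto
        finally show ?thesis .
      next
        case 2
        obtain z where z: "y < z" "z < y0" "H y0 - H y = (y0 - y) * Hd z"
          using MVT2[OF 2, of H Hd] H pos 2 by force
        have "\<bar>H y - H y0 - Hd y0 * (y - y0)\<bar> = \<bar>Hd z - Hd y0\<bar> * \<bar>y - y0\<bar>"
        proof -
          have "H y - H y0 - Hd y0 * (y - y0) = (Hd z - Hd y0) * (y - y0)"
            using z(3) by (simp add: algebra_simps)
          thus ?thesis by (simp add: abs_mult)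
        qed
        also have "\<dots> \<le> e * \<bar>y - y0\<bar>" using key[of z] z 2 by (intro mult_right_mono) auto
        finally show ?thesis .
      qed
    qed
  qed
qed

lemma cont_bound:
  fixes g :: "real \<Rightarrow> real"
  assumes "continuous_on {a..b} g"
  obtains K where "0 \<le> K" "\<And>x. x \<in> {a..b} \<Longrightarrow> \<bar>g x\<bar> \<le> K"
proof -
  have "bounded (g ` {a..b})"
    by (rule compact_imp_bounded, rule compact_continuous_image[OF assms]) simp
  then obtain K where "K > 0" "\<forall>y\<in>g ` {a..b}. norm y \<le> K" by (auto simp: bounded_pos)
  thus ?thesis using that[of K] by auto
qed

lemma ev_close: "0 < r \<Longrightarrow> eventually (\<lambda>s. \<bar>s - t\<bar> < r) (at (t::real))"
  by (auto simp: eventually_at dist_real_def intro!: exI[of _ r])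

lemma Hcont:
  fixes H Hd :: "real \<Rightarrow> real"
  assumes H: "\<forall>y>0. (H has_real_derivative Hd y) (at y)"
  shows "continuous_on {0<..} H"
  using H by (intro continuous_at_imp_continuous_on ballI DERIV_isCont) auto

lemma poly_cont: "continuous_on (S::real set) (\<lambda>x. poly (p::real poly) x)"
  by (meson continuous_at_imp_continuous_on poly_isCont)

lemma R_est:
  fixes a b t :: real and p :: "real \<Rightarrow> real poly" and pd :: "real poly"
  assumes T: "open T" "t \<in> T"
    and deg: "\<forall>s\<in>T. degree (p s) \<le> k" and degd: "degree pd \<le> k"
    and cd: "\<forall>i. ((\<lambda>\<sigma>. coeff (p \<sigma>) i) has_real_derivative coeff pd i) (at t)"
    and eta: "0 < \<eta>"
  shows "eventually (\<lambda>s. \<forall>x\<in>{a..b}. \<bar>poly (p s) x - poly (p t) x - (s - t) * poly pd x\<bar>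
            \<le> \<eta> * \<bar>s - t\<bar>) (at t)"
proof -
  define B where "B = max 1 (max \<bar>a\<bar> \<bar>b\<bar>)"
  have B1: "1 \<le> B" by (simp add: B_def)
  have xB: "\<bar>x ^ i\<bar> \<le> B ^ k" if "x \<in> {a..b}" "i \<le> k" for x i
  proof -
    have "\<bar>x\<bar> \<le> B" using that by (auto simp: B_def)
    hence "\<bar>x\<bar> ^ i \<le> B ^ i" by (rule power_mono) simp
    also have "\<dots> \<le> B ^ k" by (rule power_increasing[OF that(2) B1])
    finally show ?thesis by (simp add: power_abs)
  qed
  define \<eta>0 where "\<eta>0 = \<eta> / (real (k+1) * B ^ k)"
  have Bpos: "0 < B ^ k" using B1 by simp
  have e0: "0 < \<eta>0" using eta Bpos by (simp add: \<eta>0_def)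
  have "\<forall>i\<in>{..k}. eventually (\<lambda>s. \<bar>coeff (p s) i - coeff (p t) i - coeff pd i * (s - t)\<bar>
           \<le> \<eta>0 * \<bar>s - t\<bar>) (at t)"
    using deriv_eps[OF _ e0] cd by blast
  hence "eventually (\<lambda>s. \<forall>i\<in>{..k}. \<bar>coeff (p s) i - coeff (p t) i - coeff pd i * (s - t)\<bar>
           \<le> \<eta>0 * \<bar>s - t\<bar>) (at t)"
    by (rule eventually_ball_finite[rotated]) simp
  moreover have "eventually (\<lambda>s. s \<in> T) (at t)" using eventually_at_in_open'[OF T] .
  ultimately show ?thesis
  proof eventually_elim
    case (elim s)
    show ?case
    proof
      fix x assume x: "x \<in> {a..b}"
      have "poly (p s) x - poly (p t) x - (s - t) * poly pd x
          = (\<Sum>i\<le>k. coeff (p s) i * x^i) - (\<Sum>i\<le>k. coeff (p t) i * x^i) - (s-t)*(\<Sum> i\<le>k. coeff pd i * x^i)"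
        using poly_le_sum[of "p s" k x] poly_le_sum[of "p t" k x] poly_le_sum[OF degd, of x]
          deg elim(2) T(2) by simp
      also have "\<dots> = (\<Sum>i\<le>k. (coeff (p s) i - coeff (p t) i - coeff pd i * (s - t)) * x ^ i)"
        unfolding sum_distrib_left sum_subtractf[symmetric] by (rule sum.cong) (auto simp: algebra_simps)
      also have "\<bar>\<dots>\<bar> \<le> (\<Sum>i\<le>k. \<bar>(coeff (p s) i - coeff (p t) i - coeff pd i * (s - t)) * x ^ i\<bar>)"
        by (rule sum_abs)
      also have "\<dots> \<le> (\<Sum>i\<le>k. \<eta>0 * \<bar>s - t\<bar> * B ^ k)"
      proof (rule sum_mono)
        fix i assume i: "i \<in> {..k}"
        show "\<bar>(coeff (p s) i - coeff (p t) i - coeff pd i * (s - t)) * x ^ i\<bar> \<le> \<eta>0 * \<bar>s - t\<bar> * B ^ k"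
          unfolding abs_mult using elim(1) i xB[OF x, of i]
          by (intro mult_mono) auto
      qed
      also have "\<dots> = real (k+1) * (\<eta>0 * \<bar>s - t\<bar> * B ^ k)" by simp
      also have "\<dots> = \<eta> * \<bar>s - t\<bar>"
        using Bpos B1 unfolding \<eta>0_def by (simp del: of_nat_Suc)
      finally show "\<bar>poly (p s) x - poly (p t) x - (s - t) * poly pd x\<bar> \<le> \<eta> * \<bar>s - t\<bar>" .
    qed
  qed
qed

lemma cell_deriv:
  fixes a b t :: real and p :: "real \<Rightarrow> real poly" and pd :: "real poly"
    and \<Phi> H Hd :: "real \<Rightarrow> real" and T :: "real set"
  assumes ab: "a \<le> b" and T: "open T" "t \<in> T"
    and deg: "\<forall>s\<in>T. degree (p s) \<le> k" and degd: "degree pd \<le> k"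
    and cd: "\<forall>i. ((\<lambda>\<sigma>. coeff (p \<sigma>) i) has_real_derivative coeff pd i) (at t)"
    and pos: "\<forall>s\<in>T. \<forall>x\<in>{a..b}. 0 < poly (p s) x"
    and H: "\<forall>y>0. (H has_real_derivative Hd y) (at y)" and Hd: "continuous_on {0<..} Hd"
    and Phi: "continuous_on {a..b} \<Phi>"
  shows "((\<lambda>s. integral {a..b} (\<lambda>x. \<Phi> x * poly (p s) x + H (poly (p s) x)))
           has_real_derivative integral {a..b} (\<lambda>x. (\<Phi> x + Hd (poly (p t) x)) * poly pd x)) (at t)"
proof -
  define g where "g s x = \<Phi> x * poly (p s) x + H (poly (p s) x)" for s x
  define G where "G x = (\<Phi> x + Hd (poly (p t) x)) * poly pd x" for x
  have Hc: "continuous_on {0<..} H" by (rule Hcont[OF H])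
  have gcont: "continuous_on {a..b} (g s)" if "s \<in> T" for s
    unfolding g_def
    by (intro continuous_intros Phi poly_cont continuous_on_compose2[OF Hc poly_cont])
       (use pos that in auto)
  have Hdc: "continuous_on {a..b} (\<lambda>x. Hd (poly (p t) x))"
    by (intro continuous_on_compose2[OF Hd poly_cont]) (use pos T in auto)
  have Gcont: "continuous_on {a..b} G"
    unfolding G_def by (intro continuous_intros Phi poly_cont Hdc)
  obtain KP where KP: "0 \<le> KP" "\<And>x. x \<in> {a..b} \<Longrightarrow> \<bar>poly pd x\<bar> \<le> KP"
    using cont_bound[OF poly_cont] by blast
  obtain KH where KH: "0 \<le> KH" "\<And>x. x \<in> {a..b} \<Longrightarrow> \<bar>Hd (poly (p t) x)\<bar> \<le> KH"
    using cont_bound[OF Hdc] by blast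
  obtain KF where KF: "0 \<le> KF" "\<And>x. x \<in> {a..b} \<Longrightarrow> \<bar>\<Phi> x\<bar> \<le> KF"
    using cont_bound[OF Phi] by blast
  obtain xm where xm: "xm \<in> {a..b}" "\<forall>y\<in>{a..b}. poly (p t) xm \<le> poly (p t) y"
    using continuous_attains_inf[of "{a..b}" "poly (p t)"] ab poly_cont[of "{a..b}" "p t"] by auto
  obtain xM where xM: "xM \<in> {a..b}" "\<forall>y\<in>{a..b}. poly (p t) y \<le> poly (p t) xM"
    using continuous_attains_sup[of "{a..b}" "poly (p t)"] ab poly_cont[of "{a..b}" "p t"] by auto
  define m where "m = poly (p t) xm"
  define M where "M = poly (p t) xM"
  have m0: "0 < m" using pos T xm by (simp add: m_def)
  have mM: "\<And>x. x \<in> {a..b} \<Longrightarrow> m \<le> poly (p t) x \<and> poly (p t) x \<le> M"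
    using xm xM by (auto simp: m_def M_def)
  have Hest: "eventually (\<lambda>s. \<forall>x\<in>{a..b}. \<bar>H (poly (p s) x) - H (poly (p t) x)
       - Hd (poly (p t) x) * (poly (p s) x - poly (p t) x)\<bar> \<le> \<eta> * \<bar>s - t\<bar>) (at t)"
    if eta: "0 < \<eta>" for \<eta>
  proof -
    obtain d where d: "d > 0" and dd: "\<forall>y0 y. m \<le> y0 \<and> y0 \<le> M \<and> \<bar>y - y0\<bar> < d \<longrightarrow>
           \<bar>H y - H y0 - Hd y0 * (y - y0)\<bar> \<le> \<eta> / (KP + 1) * \<bar>y - y0\<bar>"
      using H_unif[OF H Hd m0, of "\<eta> / (KP + 1)" M] eta KP(1) by auto
    have "eventually (\<lambda>s. \<forall>x\<in>{a..b}. \<bar>poly (p s) x - poly (p t) x - (s - t) * poly pd x\<bar>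
            \<le> 1 * \<bar>s - t\<bar>) (at t)"
      by (rule R_est[OF T deg degd cd]) simp
    moreover have "eventually (\<lambda>s. \<bar>s - t\<bar> < d / (KP + 1)) (at t)"
      by (rule ev_close) (use d KP in simp)
    ultimately show ?thesis
    proof eventually_elim
      case (elim s)
      show ?case
      proof
        fix x assume x: "x \<in> {a..b}"
        have "\<bar>poly (p s) x - poly (p t) x\<bar>
            \<le> \<bar>poly (p s) x - poly (p t) x - (s - t) * poly pd x\<bar> + \<bar>s - t\<bar> * \<bar>poly pd x\<bar>"
          by (simp add: abs_mult[symmetric])
        also have "\<dots> \<le> \<bar>s - t\<bar> + \<bar>s - t\<bar> * KP"
          using elim(1) x KP(2)[OF x] by (intro add_mono mult_left_mono) auto
        finally have dist: "\<bar>poly (p s) x - poly (p t) x\<bar> \<le> (KP + 1) * \<bar>s - t\<bar>"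
          by (simp add: algebra_simps)
        also have "\<dots> < d" using elim(2) KP(1)
          by (simp add: field_simps)
        finally have "\<bar>poly (p s) x - poly (p t) x\<bar> < d" .
        hence "\<bar>H (poly (p s) x) - H (poly (p t) x) - Hd (poly (p t) x) * (poly (p s) x - poly (p t) x)\<bar>
            \<le> \<eta> / (KP + 1) * \<bar>poly (p s) x - poly (p t) x\<bar>"
          using dd mM[OF x] by blast
        also have "\<dots> \<le> \<eta> / (KP + 1) * ((KP + 1) * \<bar>s - t\<bar>)"
          using dist eta KP(1) by (intro mult_left_mono) auto
        also have "\<dots> = \<eta> * \<bar>s - t\<bar>" using KP(1) by simp
        finally show "\<bar>H (poly (p s) x) - H (poly (p t) x) - Hd (poly (p t) x) * (poly (p s) x - poly (p t) x)\<bar>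
            \<le> \<eta> * \<bar>s - t\<bar>" .
      qed
    qed
  qed
  have pw: "eventually (\<lambda>s. s \<in> T \<and> (\<forall>x\<in>{a..b}. \<bar>g s x - g t x - (s - t) * G x\<bar> \<le> \<eta> * \<bar>s - t\<bar>)) (at t)"
    if eta: "0 < \<eta>" for \<eta>
  proof -
    define \<eta>1 where "\<eta>1 = \<eta> / (2 * (KF + KH + 1))"
    have e1: "0 < \<eta>1" using eta KF KH by (simp add: \<eta>1_def)
    have "eventually (\<lambda>s. \<forall>x\<in>{a..b}. \<bar>poly (p s) x - poly (p t) x - (s - t) * poly pd x\<bar>
            \<le> \<eta>1 * \<bar>s - t\<bar>) (at t)"
      by (rule R_est[OF T deg degd cd e1])
    moreover have "eventually (\<lambda>s. \<forall>x\<in>{a..b}. \<bar>H (poly (p s) x) - H (poly (p t) x)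
       - Hd (poly (p t) x) * (poly (p s) x - poly (p t) x)\<bar> \<le> \<eta>/2 * \<bar>s - t\<bar>) (at t)"
      by (rule Hest) (use eta in simp)
    moreover have "eventually (\<lambda>s. s \<in> T) (at t)" using eventually_at_in_open'[OF T] .
    ultimately show ?thesis
    proof eventually_elim
      case (elim s)
      show ?case
      proof (intro conjI ballI)
        show "s \<in> T" by (rule elim(3))
        fix x assume x: "x \<in> {a..b}"
        define R where "R = poly (p s) x - poly (p t) x - (s - t) * poly pd x"
        define E where "E = H (poly (p s) x) - H (poly (p t) x) - Hd (poly (p t) x) * (poly (p s) x - poly (p t) x)"
        have "g s x - g t x - (s - t) * G x = \<Phi> x * R + E + Hd (poly (p t) x) * R"
          by (simp add: g_def G_def R_def E_def algebra_simps)
        hence "\<bar>g s x - g t x - (s - t) * G x\<bar> \<le> \<bar>\<Phi> x\<bar> * \<bar>R\<bar> + \<bar>E\<bar> + \<bar>Hd (poly (p t) x)\<bar> * \<bar>R\<bar>"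
          by (simp add: abs_mult[symmetric])
        also have "\<dots> \<le> KF * (\<eta>1 * \<bar>s - t\<bar>) + \<eta>/2 * \<bar>s - t\<bar> + KH * (\<eta>1 * \<bar>s - t\<bar>)"
          using elim(1,2) x KF KH unfolding R_def E_def
          by (intro add_mono mult_mono) auto
        also have "\<dots> = (KF + KH) * \<eta>1 * \<bar>s - t\<bar> + \<eta>/2 * \<bar>s - t\<bar>" by (simp add: algebra_simps)
        also have "\<dots> \<le> \<eta>/2 * \<bar>s - t\<bar> + \<eta>/2 * \<bar>s - t\<bar>"
        proof -
          have "(KF + KH) * \<eta>1 \<le> \<eta>/2"
            using KF KH eta by (simp add: \<eta>1_def field_simps)
          thus ?thesis by (intro add_right_mono mult_right_mono) auto
        qed
        finally show "\<bar>g s x - g t x - (s - t) * G x\<bar> \<le> \<eta> * \<bar>s - t\<bar>" by simp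
      qed
    qed
  qed
  have "((\<lambda>s. integral {a..b} (g s)) has_real_derivative integral {a..b} G) (at t)"
  proof (rule eps_deriv)
    fix e :: real assume e: "0 < e"
    define \<eta> where "\<eta> = e / (b - a + 1)"
    have eta: "0 < \<eta>" using e ab by (simp add: \<eta>_def)
    show "eventually (\<lambda>s. \<bar>integral {a..b} (g s) - integral {a..b} (g t) - integral {a..b} G * (s - t)\<bar>
            \<le> e * \<bar>s - t\<bar>) (at t)"
      using pw[OF eta]
    proof eventually_elim
      case (elim s)
      have int: "((\<lambda>x. g s x - g t x - (s - t) * G x) has_integral
          (integral {a..b} (g s) - integral {a..b} (g t) - integral {a..b} G * (s - t))) {a..b}"
        using elim T
        by (auto simp: mult.commute[of _ "s - t"] intro!: has_integral_diff has_integral_mult_right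
            integrable_integral integrable_continuous_real gcont Gcont)
      have "\<bar>integral {a..b} (g s) - integral {a..b} (g t) - integral {a..b} G * (s - t)\<bar>
          \<le> \<eta> * \<bar>s - t\<bar> * Henstock_Kurzweil_Integration.content {a..b}"
        using has_integral_bound_real[OF _ _ int, where S="{}"] elim eta by auto
      also have "\<dots> = \<eta> * \<bar>s - t\<bar> * (b - a)" using ab by simp
      also have "\<dots> \<le> e * \<bar>s - t\<bar>"
      proof -
        have "\<eta> * (b - a) \<le> e" using e ab by (simp add: \<eta>_def field_simps)
        hence "\<eta> * (b - a) * \<bar>s - t\<bar> \<le> e * \<bar>s - t\<bar>" by (rule mult_right_mono) simp
        thus ?thesis by (simp add: mult_ac)
      qed
      finally show ?case .
    qed
  qed
  thus ?thesis unfolding g_def G_def .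
qed


lemma perj:
  fixes c h b0 G S J w :: real
  assumes c: "0 \<le> c" and h: "0 < h" and b0: "0 < b0" and G: "0 \<le> G" and S: "0 \<le> S"
    and ineq: "c * w^2 \<le> G * (S / (2*h))"
  shows "- (c * (2 * J * w)) \<le> sqrt (G/b0) * (c * b0 / h * J^2) + sqrt (G/b0) / 2 * S"
proof (cases "G = 0")
  case True
  hence "c * w^2 \<le> 0" using ineq by simp
  moreover have "0 \<le> c * w^2" using c by simp
  ultimately have "c * w^2 = 0" by linarith
  hence "c * w = 0" by (simp add: power2_eq_square)
  hence "c * (2 * J * w) = 0" by (simp add: algebra_simps)
  thus ?thesis using True by auto
next
  case False
  define r where "r = sqrt (G/b0)"
  have r: "0 < r" using False G b0 by (simp add: r_def)
  have r2: "r^2 = G/b0" using G b0 by (simp add: r_def)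
  hence Gr: "G = r^2 * b0" using b0 by (simp add: field_simps)
  have "h * c * w^2 / (r * b0) \<le> r / 2 * S"
  proof -
    have "h * c * w^2 \<le> h * (G * (S / (2*h)))" using mult_left_mono[OF ineq, of h] h by (simp add: mult.assoc)
    also have "\<dots> = r^2 * b0 * S / 2" using h Gr by (simp add: field_simps)
    finally have "h * c * w^2 \<le> r^2 * b0 * S / 2" .
    hence "h * c * w^2 / (r * b0) \<le> (r^2 * b0 * S / 2) / (r * b0)"
      using r b0 by (intro divide_right_mono) auto
    also have "\<dots> = r / 2 * S" using r b0 by (simp add: field_simps power2_eq_square)
    finally show ?thesis .
  qed
  moreover have "- (c * (2 * J * w)) \<le> r * (c * b0 / h * J^2) + h * c * w^2 / (r * b0)"
  proof -
    have "0 \<le> c * (r * b0 * J + h * w)^2 / (r * b0 * h)"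
      using c r b0 h by simp
    also have "c * (r * b0 * J + h * w)^2 / (r * b0 * h)
        = r * (c * b0 / h * J^2) + h * c * w^2 / (r * b0) + c * (2 * J * w)"
      using r b0 h by (simp add: field_simps power2_eq_square)
    finally show ?thesis by linarith
  qed
  ultimately show ?thesis unfolding r_def by linarith
qed


theorem theorem3p1:
  fixes xn :: "nat \<Rightarrow> real" and N k :: nat
    and f \<Phi> H Hd :: "real \<Rightarrow> real" and \<beta>0 \<beta>1 t :: real and T :: "real set"
    and U Ut Q :: "real \<Rightarrow> nat \<Rightarrow> real poly"
  assumes N: "2 \<le> N" and k: "1 \<le> k"
    and mesh: "\<forall>j<N. xn j < xn (Suc j)"
    and H: "\<forall>y>0. (H has_real_derivative Hd y) (at y)" and Hd: "continuous_on {0<..} Hd"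
    and Phi: "continuous_on {xn 0..xn N} \<Phi>"
    and f: "continuous_on {0<..} f"
    and T: "open T" "t \<in> T"
    and Vh: "\<forall>s\<in>T. in_Vh k N (U s) \<and> in_Vh k N (Ut s) \<and> in_Vh k N (Q s)"
    and pos: "\<forall>s\<in>T. \<forall>j\<in>{1..N}. \<forall>x\<in>{xn (j - 1)..xn j}. 0 < poly (U s j) x"
    and fnn: "\<forall>s\<in>T. \<forall>j\<in>{1..N}. \<forall>x\<in>{xn (j - 1)..xn j}. 0 \<le> f (poly (U s j) x)"
    and diff: "\<forall>s\<in>T. \<forall>j\<in>{1..N}. \<forall>i.
                 ((\<lambda>\<sigma>. coeff (U \<sigma> j) i) has_real_derivative coeff (Ut s j) i) (at s)"
    and eq1: "\<forall>s\<in>T. \<forall>v. in_Vh k N v \<longrightarrow>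
                 (\<Sum>j=1..N. cellint xn j (\<lambda>x. poly (Ut s j) x * poly (v j) x))
                 = DGform f xn N \<beta>0 \<beta>1 (U s) (Q s) v"
    and eq2: "\<forall>s\<in>T. \<forall>r. in_Vh k N r \<longrightarrow>
                 (\<Sum>j=1..N. cellint xn j (\<lambda>x. poly (Q s j) x * poly (r j) x))
                 = (\<Sum>j=1..N. cellint xn j (\<lambda>x. (\<Phi> x + Hd (poly (U s j) x)) * poly (r j) x))"
    and den: "\<forall>j\<in>{1..N-1}. 0 < Gden f xn (U t) (Q t) j"
    and beta: "Gamma f xn N \<beta>1 (U t) (Q t) < \<beta>0"
  shows "let \<gamma> = 1 - sqrt (Gamma f xn N \<beta>1 (U t) (Q t) / \<beta>0) in
           0 < \<gamma> \<and> \<gamma> \<le> 1 \<and>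
           (\<exists>D. ((\<lambda>s. entropy \<Phi> H xn N (U s)) has_real_derivative D) (at t) \<and>
                D \<le> - \<gamma> * energy2 f xn N \<beta>0 (U t) (Q t))"
proof -
  have mono: "xn i \<le> xn j" if "i \<le> j" "j \<le> N" for i j
    using that
  proof (induction j rule: dec_induct)
    case base show ?case by simp
  next
    case (step n)
    hence "xn n < xn (Suc n)" using mesh by auto
    thus ?case using step by linarith
  qed
  have cell: "xn (j - 1) < xn j" if "j \<in> {1..N}" for j
    using mesh[rule_format, of "j - 1"] that by auto
  have Vt: "in_Vh k N (U t)" "in_Vh k N (Ut t)" "in_Vh k N (Q t)" using Vh T by auto
  define D where "D = (\<Sum>j=1..N. integral {xn (j - 1)..xn j}
      (\<lambda>x. (\<Phi> x + Hd (poly (U t j) x)) * poly (Ut t j) x))"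
  have dE: "((\<lambda>s. entropy \<Phi> H xn N (U s)) has_real_derivative D) (at t)"
    unfolding entropy_def cellint_def D_def
  proof (rule DERIV_sum)
    fix j assume j: "j \<in> {1..N}"
    show "((\<lambda>s. integral {xn (j - 1)..xn j} (\<lambda>x. \<Phi> x * poly (U s j) x + H (poly (U s j) x)))
       has_real_derivative integral {xn (j - 1)..xn j}
      (\<lambda>x. (\<Phi> x + Hd (poly (U t j) x)) * poly (Ut t j) x)) (at t)"
    proof (rule cell_deriv[where k=k and T=T])
      show "xn (j - 1) \<le> xn j" using cell[OF j] by simp
      show "\<forall>s\<in>T. degree (U s j) \<le> k" using Vh j by (auto simp: in_Vh_def)
      show "degree (Ut t j) \<le> k" using Vt j by (auto simp: in_Vh_def)
      show "\<forall>i. ((\<lambda>\<sigma>. coeff (U \<sigma> j) i) has_real_derivative coeff (Ut t j) i) (at t)"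
        using diff T j by auto
      show "\<forall>s\<in>T. \<forall>x\<in>{xn (j - 1)..xn j}. 0 < poly (U s j) x" using pos j by auto
      show "continuous_on {xn (j - 1)..xn j} \<Phi>"
        by (rule continuous_on_subset[OF Phi]) (use mono j in auto)
    qed (use T H Hd in auto)
  qed
  have D1: "D = (\<Sum>j=1..N. cellint xn j (\<lambda>x. poly (Q t j) x * poly (Ut t j) x))"
    using eq2 T Vt by (simp add: D_def cellint_def)
  also have "\<dots> = (\<Sum>j=1..N. cellint xn j (\<lambda>x. poly (Ut t j) x * poly (Q t j) x))"
    by (simp add: mult.commute)
  also have "\<dots> = DGform f xn N \<beta>0 \<beta>1 (U t) (Q t) (Q t)"
    using eq1 T Vt by simp
  finally have D2: "D = DGform f xn N \<beta>0 \<beta>1 (U t) (Q t) (Q t)" .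
  define u where "u = U t"
  define q where "q = Q t"
  define Gm where "Gm = Gamma f xn N \<beta>1 u q"
  define A where "A j = cellint xn j (\<lambda>x. f (poly (u j) x) * (poly (dx q j) x)\<^sup>2)" for j
  define c where "c j = avgf f xn u j" for j
  define J where "J j = jump xn q j" for j
  define h where "h j = hI xn j" for j
  define w where "w j = avg xn (dx q) j + \<beta>1 / 2 * hI xn j * jump xn (dx (dx q)) j" for j
  define \<rho> where "\<rho> = sqrt (Gm / \<beta>0)"
  have hpos: "0 < h j" if "j \<in> {1..N-1}" for j
  proof -
    have "xn (j - 1) < xn j" "xn j < xn (Suc j)" using cell[of j] cell[of "Suc j"] that by auto
    thus ?thesis by (simp add: h_def hI_def)
  qed
  have cnn: "0 \<le> c j" if "j \<in> {1..N-1}" for j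
  proof -
    have lt: "xn j < xn (Suc j)" using cell[of "Suc j"] that by auto
    have lt2: "xn (j - 1) < xn j" using cell[of j] that by auto
    have "0 \<le> f (poly (U t (Suc j)) (xn j))"
      using fnn T that lt by (auto intro!: fnn[rule_format, of t "Suc j"])
    moreover have "0 \<le> f (poly (U t j) (xn j))"
      using fnn T that lt2 by (auto intro!: fnn[rule_format, of t j])
    ultimately show ?thesis by (simp add: c_def avgf_def u_def)
  qed
  have Ann: "0 \<le> A j" if "j \<in> {1..N}" for j
  proof -
    have fc: "continuous_on {xn (j - 1)..xn j} (\<lambda>x. f (poly (U t j) x))"
      by (intro continuous_on_compose2[OF f poly_cont]) (use pos T that in \<open>auto\<close>)
    show ?thesis unfolding A_def cellint_def u_def
    proof (rule integral_nonneg)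
      show "(\<lambda>x. f (poly (U t j) x) * (poly (dx q j) x)\<^sup>2) integrable_on {xn (j - 1)..xn j}"
        by (intro integrable_continuous_real continuous_intros fc poly_cont)
      show "0 \<le> f (poly (U t j) x) * (poly (dx q j) x)\<^sup>2" if "x \<in> {xn (j - 1)..xn j}" for x
        using fnn T \<open>j \<in> {1..N}\<close> that by auto
    qed
  qed
  have Gden_eq: "Gden f xn u q j = (A j + A (Suc j)) / (2 * h j)" for j
    by (simp add: Gden_def A_def h_def)
  have Gnum_eq: "Gnum f xn \<beta>1 u q j = c j * (w j)\<^sup>2" for j
    by (simp add: Gnum_def c_def w_def)
  have fin: "finite ((\<lambda>j. Gnum f xn \<beta>1 u q j / Gden f xn u q j) ` {1..N-1})" by simp
  have Gge: "Gnum f xn \<beta>1 u q j / Gden f xn u q j \<le> Gm" if "j \<in> {1..N-1}" for j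
    unfolding Gm_def Gamma_def by (rule Max_ge[OF fin]) (use that in auto)
  have ineq: "c j * (w j)\<^sup>2 \<le> Gm * ((A j + A (Suc j)) / (2 * h j))" if j: "j \<in> {1..N-1}" for j
  proof -
    have "0 < Gden f xn u q j" using den j by (simp add: u_def q_def)
    hence "Gnum f xn \<beta>1 u q j \<le> Gm * Gden f xn u q j" using Gge[OF j]
      by (simp add: pos_divide_le_eq)
    thus ?thesis by (simp only: Gden_eq Gnum_eq)
  qed
  have Gm0: "0 \<le> Gm"
  proof -
    have j1: "1 \<in> {1..N-1}" using N by auto
    have "0 < Gden f xn u q 1" using den j1 by (simp add: u_def q_def)
    moreover have "0 \<le> Gnum f xn \<beta>1 u q 1" using cnn[OF j1] by (simp add: Gnum_eq)
    ultimately show ?thesis using Gge[OF j1] by (meson divide_nonneg_pos order.trans)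
  qed
  have b0: "0 < \<beta>0" using Gm0 beta by (simp add: Gm_def u_def q_def)
  have rho0: "0 \<le> \<rho>" using Gm0 b0 by (simp add: \<rho>_def)
  have rho1: "\<rho> < 1" using Gm0 b0 beta by (simp add: \<rho>_def Gm_def u_def q_def)
  have DG: "DGform f xn N \<beta>0 \<beta>1 u q q = - (\<Sum>j=1..N. A j)
      - (\<Sum>j=1..N-1. c j * \<beta>0 / h j * (J j)\<^sup>2) - (\<Sum>j=1..N-1. c j * (2 * J j * w j))"
  proof -
    have s1: "(\<Sum>j=1..N. cellint xn j (\<lambda>x. f (poly (u j) x) * poly (dx q j) x * poly (dx q j) x))
        = (\<Sum>j=1..N. A j)"
      by (simp add: A_def power2_eq_square mult.assoc)
    have s2: "(\<Sum>j=1..N-1. avgf f xn u j * (flux xn \<beta>0 \<beta>1 q j * jump xn q j + avg xn (dx q) j * jump xn q j))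
        = (\<Sum>j=1..N-1. c j * \<beta>0 / h j * (J j)\<^sup>2) + (\<Sum>j=1..N-1. c j * (2 * J j * w j))"
      unfolding sum.distrib[symmetric]
      by (rule sum.cong) (simp_all add: flux_def c_def h_def J_def w_def field_simps power2_eq_square)
    show ?thesis unfolding DGform_def s1 s2 by simp
  qed
  have En: "energy2 f xn N \<beta>0 u q = (\<Sum>j=1..N. A j) + (\<Sum>j=1..N-1. c j * \<beta>0 / h j * (J j)\<^sup>2)"
    by (simp add: energy2_def A_def c_def h_def J_def)
  have X: "- (\<Sum>j=1..N-1. c j * (2 * J j * w j)) \<le>
      \<rho> * (\<Sum>j=1..N-1. c j * \<beta>0 / h j * (J j)\<^sup>2) + \<rho> / 2 * ((\<Sum>j=1..N-1. A j) + (\<Sum>j=1..N-1. A (Suc j)))"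
  proof -
    have "- (\<Sum>j=1..N-1. c j * (2 * J j * w j)) = (\<Sum>j=1..N-1. - (c j * (2 * J j * w j)))"
      by (simp add: sum_negf)
    also have "\<dots> \<le> (\<Sum>j=1..N-1. \<rho> * (c j * \<beta>0 / h j * (J j)\<^sup>2) + \<rho> / 2 * (A j + A (Suc j)))"
    proof (rule sum_mono)
      fix j assume j: "j \<in> {1..N-1}"
      have "0 \<le> A j + A (Suc j)" using Ann[of j] Ann[of "Suc j"] j by auto
      thus "- (c j * (2 * J j * w j)) \<le> \<rho> * (c j * \<beta>0 / h j * (J j)\<^sup>2) + \<rho> / 2 * (A j + A (Suc j))"
        unfolding \<rho>_def using perj[OF cnn[OF j] hpos[OF j] b0 Gm0 _ ineq[OF j]] by blast
    qed
    also have "\<dots> = \<rho> * (\<Sum>j=1..N-1. c j * \<beta>0 / h j * (J j)\<^sup>2) + \<rho> / 2 * ((\<Sum>j=1..N-1. A j) + (\<Sum>j=1..N-1. A (Suc j)))"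
      by (simp only: sum.distrib sum_distrib_left distrib_left)
    finally show ?thesis .
  qed
  have SA1: "(\<Sum>j=1..N-1. A j) \<le> (\<Sum>j=1..N. A j)"
    by (rule sum_mono2) (use Ann in auto)
  have SA2: "(\<Sum>j=1..N-1. A (Suc j)) \<le> (\<Sum>j=1..N. A j)"
  proof -
    have "(\<Sum>j=1..N-1. A (Suc j)) = (\<Sum>j=Suc 1..Suc (N-1). A j)"
      by (rule sum.shift_bounds_cl_Suc_ivl[symmetric])
    also have "\<dots> = (\<Sum>j=2..N. A j)" using N by (simp add: numeral_2_eq_2)
    also have "\<dots> \<le> (\<Sum>j=1..N. A j)" by (rule sum_mono2) (use Ann in auto)
    finally show ?thesis .
  qed
  have "\<rho> / 2 * ((\<Sum>j=1..N-1. A j) + (\<Sum>j=1..N-1. A (Suc j))) \<le> \<rho> / 2 * (2 * (\<Sum>j=1..N. A j))"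
    using SA1 SA2 rho0 by (intro mult_left_mono) auto
  hence Dle: "D \<le> - (1 - \<rho>) * energy2 f xn N \<beta>0 u q"
    using X unfolding D2 u_def[symmetric] q_def[symmetric] DG En by (simp add: algebra_simps)
  show ?thesis
    unfolding Let_def
    using dE Dle rho0 rho1 by (auto simp: \<rho>_def Gm_def u_def q_def)
qed

end
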